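(* Let $G=(V,E)$ be a finite directed acyclic graph, $G'=(V,E')$ its minimum equivalent graph, and $f:V\to S$ a stream assignment satisfying maximum logical concurrency on $G'$. Then $\mathrm{min}_{sync}(G',f)=|E'|-|Q(f)|$.
   Context: A path from $u$ to $v$ in a directed graph is a nonempty sequence of edges $(u,w_1),\dots,(w_k,v)$ of that graph. The minimum equivalent graph (MEG) of a finite DAG $G=(V,E)$ is the subgraph $G'=(V,E')$, $E'\subseteq E$, with the same vertex set and the smallest number of edges among subgraphs having the same reachability relation as $G$. A stream assignment is a function $f:V\to S$ into a set of streams $S$; it satisfies maximum logical concurrency on $G'$ if for all distinct $u,v\in V$ with no path between them in either direction in $G'$, $f(u)\neq f(v)$. A synchronization plan $\Lambda\subseteq E'$ is safe for $f$ on $G'$ if for every edge $(u,v)\in E'$, either $f(u)=f(v)$ or there is a path $P\subseteq E'$ from $u$ to $v$ with $P\cap\Lambda\neq\emptyset$; $\mathrm{min}_{sync}(G',f)=\min\{|\Lambda| : \Lambda\subseteq E' \text{ safe for } f \text{ on } G'\}$. Define $Q(f)=\{v\in V : \exists p\in V \text{ with } (p,v)\in E' \text{ and } f(p)=f(v)\}$. *)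

theory Defs
  imports Main
begin

definition epath :: "('a \<times> 'a) set \<Rightarrow> 'a \<Rightarrow> 'a \<Rightarrow> ('a \<times> 'a) list \<Rightarrow> bool" where
  "epath E u v es \<longleftrightarrow> es \<noteq> [] \<and> set es \<subseteq> E \<and> fst (hd es) = u \<and> snd (last es) = v
     \<and> (\<forall>i. Suc i < length es \<longrightarrow> snd (es ! i) = fst (es ! Suc i))"

definition finite_dag :: "'a set \<Rightarrow> ('a \<times> 'a) set \<Rightarrow> bool" where
  "finite_dag V E \<longleftrightarrow> finite V \<and> E \<subseteq> V \<times> V \<and> acyclic E"

definition is_MEG :: "('a \<times> 'a) set \<Rightarrow> ('a \<times> 'a) set \<Rightarrow> bool" where
  "is_MEG E E' \<longleftrightarrow> E' \<subseteq> E \<and> E'\<^sup>+ = E\<^sup>+ \<and>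
     (\<forall>E''. E'' \<subseteq> E \<and> E''\<^sup>+ = E\<^sup>+ \<longrightarrow> card E' \<le> card E'')"

definition max_logical_concurrency :: "'a set \<Rightarrow> ('a \<times> 'a) set \<Rightarrow> ('a \<Rightarrow> 's) \<Rightarrow> bool" where
  "max_logical_concurrency V E' f \<longleftrightarrow>
     (\<forall>u\<in>V. \<forall>v\<in>V. u \<noteq> v \<and> \<not>(\<exists>P. epath E' u v P) \<and> \<not>(\<exists>P. epath E' v u P) \<longrightarrow> f u \<noteq> f v)"

definition safe_sync :: "('a \<times> 'a) set \<Rightarrow> ('a \<Rightarrow> 's) \<Rightarrow> ('a \<times> 'a) set \<Rightarrow> bool" where
  "safe_sync E' f \<Lambda> \<longleftrightarrow> \<Lambda> \<subseteq> E' \<and>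
     (\<forall>(u,v)\<in>E'. f u = f v \<or> (\<exists>P. epath E' u v P \<and> set P \<inter> \<Lambda> \<noteq> {}))"

definition min_sync :: "('a \<times> 'a) set \<Rightarrow> ('a \<Rightarrow> 's) \<Rightarrow> nat" where
  "min_sync E' f = Min (card ` {\<Lambda>. safe_sync E' f \<Lambda>})"

definition Qset :: "'a set \<Rightarrow> ('a \<times> 'a) set \<Rightarrow> ('a \<Rightarrow> 's) \<Rightarrow> 'a set" where
  "Qset V E' f = {v\<in>V. \<exists>p\<in>V. (p,v) \<in> E' \<and> f p = f v}"

end

theory Submission
  imports Defs
begin

lemma chain_trancl:
  assumes c: "\<forall>i. Suc i < length es \<longrightarrow> snd (es!i) = fst (es!Suc i)"
    and ij: "i \<le> j" and jl: "j < length es"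
  shows "(fst (es!i), snd (es!j)) \<in> (set es)\<^sup>+"
  using ij jl
proof (induction j rule: dec_induct)
  case base
  then have "es!i \<in> set es" by simp
  then show ?case by (metis prod.collapse r_into_trancl)
next
  case (step j)
  then have a: "(fst (es!i), snd (es!j)) \<in> (set es)\<^sup>+" by simp
  have b: "snd (es!j) = fst (es!Suc j)" using c step by blast
  have "es!Suc j \<in> set es" using step by simp
  then have "(fst (es!Suc j), snd (es!Suc j)) \<in> set es" by simp
  then show ?case using a b by (metis trancl_into_trancl)
qed

lemma epath_trancl:
  assumes "epath E u v es" shows "(u,v) \<in> (set es)\<^sup>+"
proof -
  have ne: "es \<noteq> []" using assms unfolding epath_def by blast
  have "(fst (es!0), snd (es!(length es - 1))) \<in> (set es)\<^sup>+"
    using chain_trancl[of es 0 "length es - 1"] assms ne unfolding epath_def by auto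
  moreover have "fst (es!0) = u" using assms ne unfolding epath_def by (simp add: hd_conv_nth)
  moreover have "snd (es!(length es - 1)) = v" using assms ne unfolding epath_def by (simp add: last_conv_nth)
  ultimately show ?thesis by simp
qed

lemma avoid:
  assumes "(x,y) \<in> E\<^sup>+"
  shows "(x,y) \<in> (E - {e})\<^sup>+ \<or> (snd e, y) \<in> E\<^sup>*"
  using assms
proof (induction rule: trancl_induct)
  case (base y)
  then show ?case by (cases "(x,y) = e") auto
next
  case (step y z)
  show ?case
  proof (cases "(y,z) = e")
    case True then show ?thesis by auto
  next
    case False
    then have "(y,z) \<in> E - {e}" using step by auto
    then show ?thesis using step.IH step.hyps(2)
      by (meson rtrancl.rtrancl_into_rtrancl trancl.trancl_into_trancl)
  qed
qed

lemma redundant: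
  assumes meg: "is_MEG E E'" and fin: "finite E" and e: "e \<in> E'"
    and r: "e \<in> (E' - {e})\<^sup>+"
  shows False
proof -
  let ?R = "E' - {e}"
  have "E' \<subseteq> ?R\<^sup>+" using r by auto
  then have "E'\<^sup>+ \<subseteq> (?R\<^sup>+)\<^sup>+" by (meson subrelI trancl_mono)
  then have "E'\<^sup>+ \<subseteq> ?R\<^sup>+" by simp
  moreover have "?R\<^sup>+ \<subseteq> E'\<^sup>+" by (meson Diff_subset subrelI trancl_mono)
  ultimately have eq: "?R\<^sup>+ = E\<^sup>+" using meg unfolding is_MEG_def by auto
  have sub: "?R \<subseteq> E" using meg unfolding is_MEG_def by auto
  have "finite E'" using meg fin unfolding is_MEG_def using finite_subset by blast
  then have "card ?R < card E'" using e by (meson card_Diff1_less)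
  moreover have "card E' \<le> card ?R" using meg eq sub unfolding is_MEG_def by blast
  ultimately show False by simp
qed

lemma unique_path:
  assumes meg: "is_MEG E E'" and fin: "finite E" and ac: "acyclic E'"
    and e: "(u,v) \<in> E'" and p: "epath E' u v P"
  shows "P = [(u,v)]"
proof (cases "(u,v) \<in> set P")
  case False
  have "(u,v) \<in> (set P)\<^sup>+" using epath_trancl[OF p] .
  moreover have "set P \<subseteq> E' - {(u,v)}" using p False unfolding epath_def by auto
  ultimately have "(u,v) \<in> (E' - {(u,v)})\<^sup>+" using trancl_mono by blast
  then show ?thesis using redundant[OF meg fin e] by blast
next
  case True
  then obtain i where i: "i < length P" "P!i = (u,v)" by (metis in_set_conv_nth)
  have c: "\<forall>i. Suc i < length P \<longrightarrow> snd (P!i) = fst (P!Suc i)" and ne: "P \<noteq> []"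
    and sP: "set P \<subseteq> E'"
    and h: "fst (P!0) = u" and l: "snd (P!(length P - 1)) = v"
    using p unfolding epath_def by (auto simp: hd_conv_nth last_conv_nth)
  have i0: "i = 0"
  proof (rule ccontr)
    assume "i \<noteq> 0"
    then have "(fst (P!0), snd (P!(i-1))) \<in> (set P)\<^sup>+" using chain_trancl[OF c, of 0 "i-1"] i by auto
    moreover have "snd (P!(i-1)) = fst (P!i)" using c i \<open>i \<noteq> 0\<close>
      by (metis Suc_pred' not_gr_zero)
    ultimately have "(u,u) \<in> (set P)\<^sup>+" using h i by simp
    then have "(u,u) \<in> E'\<^sup>+" using sP trancl_mono by blast
    then show False using ac unfolding acyclic_def by blast
  qed
  have il: "i = length P - 1"
  proof (rule ccontr)
    assume "i \<noteq> length P - 1"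
    then have "(fst (P!Suc i), snd (P!(length P - 1))) \<in> (set P)\<^sup>+"
      using chain_trancl[OF c, of "Suc i" "length P - 1"] i by auto
    moreover have "snd (P!i) = fst (P!Suc i)" using c i \<open>i \<noteq> length P - 1\<close>
      by (metis Suc_lessI Suc_pred' diff_less_Suc less_Suc_eq_0_disj not_less_eq)
    ultimately have "(v,v) \<in> (set P)\<^sup>+" using l i by simp
    then have "(v,v) \<in> E'\<^sup>+" using sP trancl_mono by blast
    then show False using ac unfolding acyclic_def by blast
  qed
  have "length P = 1" using i0 il ne by (cases P) auto
  then show ?thesis using i i0 by (cases P) auto
qed

theorem lemma4:
  fixes V :: "'a set" and E E' :: "('a \<times> 'a) set" and f :: "'a \<Rightarrow> 's"
  assumes "finite_dag V E"
    and "is_MEG E E'"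
    and "max_logical_concurrency V E' f"
  shows "int (min_sync E' f) = int (card E') - int (card (Qset V E' f))"
proof -
  have finV: "finite V" and EV: "E \<subseteq> V \<times> V" and acE: "acyclic E"
    using assms(1) unfolding finite_dag_def by auto
  have finE: "finite E" using finV EV by (meson finite_SigmaI finite_subset)
  have sub: "E' \<subseteq> E" using assms(2) unfolding is_MEG_def by auto
  have finE': "finite E'" using finE sub finite_subset by blast
  have ac: "acyclic E'" using acE sub acyclic_subset by blast
  have E'V: "E' \<subseteq> V \<times> V" using sub EV by auto
  have single: "epath E' u v [(u,v)]" if "(u,v) \<in> E'" for u v
    using that unfolding epath_def by auto
  define L where "L = {(u,v)\<in>E'. f u \<noteq> f v}"
  define S where "S = {(u,v)\<in>E'. f u = f v}"
  have safeL: "safe_sync E' f L"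
    unfolding safe_sync_def L_def using single by fastforce
  have Lsub: "L \<subseteq> \<Lambda>" if "safe_sync E' f \<Lambda>" for \<Lambda>
  proof
    fix x assume "x \<in> L"
    then obtain u v where x: "x = (u,v)" "(u,v) \<in> E'" "f u \<noteq> f v" unfolding L_def by auto
    have "\<exists>P. epath E' u v P \<and> set P \<inter> \<Lambda> \<noteq> {}"
      using that x unfolding safe_sync_def by blast
    then obtain P where "epath E' u v P" "set P \<inter> \<Lambda> \<noteq> {}" by blast
    then have "P = [(u,v)]" "set P \<inter> \<Lambda> \<noteq> {}"
      using unique_path[OF assms(2) finE ac x(2)] by auto
    then show "x \<in> \<Lambda>" using x by auto
  qed
  have finset: "finite {\<Lambda>. safe_sync E' f \<Lambda>}"
  proof -
    have "{\<Lambda>. safe_sync E' f \<Lambda>} \<subseteq> Pow E'" unfolding safe_sync_def by auto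
    then show ?thesis using finE' finite_subset by blast
  qed
  have ms: "min_sync E' f = card L"
    unfolding min_sync_def
  proof (rule Min_eqI)
    show "finite (card ` {\<Lambda>. safe_sync E' f \<Lambda>})" using finset by simp
    show "card L \<in> card ` {\<Lambda>. safe_sync E' f \<Lambda>}" using safeL by blast
    fix y assume "y \<in> card ` {\<Lambda>. safe_sync E' f \<Lambda>}"
    then obtain \<Lambda> where "safe_sync E' f \<Lambda>" "y = card \<Lambda>" by blast
    moreover have "finite \<Lambda>" using calculation(1) finE' finite_subset unfolding safe_sync_def by blast
    ultimately show "card L \<le> y" using Lsub card_mono by blast
  qed
  have part: "card E' = card L + card S"
  proof -
    have "E' = L \<union> S" "L \<inter> S = {}" unfolding L_def S_def by auto
    moreover have "finite L" "finite S" using finE' unfolding L_def S_def by (auto intro: finite_subset)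
    ultimately show ?thesis by (metis card_Un_disjoint)
  qed
  have bij: "bij_betw snd S (Qset V E' f)"
    unfolding bij_betw_def
  proof
    show "inj_on snd S"
    proof (rule inj_onI)
      fix x y assume x: "x \<in> S" and y: "y \<in> S" and sxy: "snd x = snd y"
      obtain p v where xp: "x = (p,v)" "(p,v) \<in> E'" "f p = f v" using x unfolding S_def by auto
      obtain p' where yp: "y = (p',v)" "(p',v) \<in> E'" "f p' = f v" using y sxy xp unfolding S_def by auto
      show "x = y"
      proof (rule ccontr)
        assume "x \<noteq> y"
        then have ne: "p \<noteq> p'" using xp yp by auto
        have "p \<in> V" "p' \<in> V" using xp yp E'V by auto
        then have "(\<exists>P. epath E' p p' P) \<or> (\<exists>P. epath E' p' p P)"
          using assms(3) ne xp yp unfolding max_logical_concurrency_def by metis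
        moreover have False if "epath E' a b P" "(b,v) \<in> E'" "(a,v) \<in> E'" "a \<noteq> b" for a b P
        proof -
          have "(a,b) \<in> E'\<^sup>+" using epath_trancl[OF that(1)] that(1) trancl_mono
            unfolding epath_def by blast
          then have "(a,b) \<in> (E' - {(a,v)})\<^sup>+ \<or> (v,b) \<in> E'\<^sup>*" using avoid by fastforce
          then show False
          proof
            assume "(a,b) \<in> (E' - {(a,v)})\<^sup>+"
            moreover have "(b,v) \<in> E' - {(a,v)}" using that by auto
            ultimately have "(a,v) \<in> (E' - {(a,v)})\<^sup>+" by (rule trancl_into_trancl)
            then show False using redundant[OF assms(2) finE that(3)] by blast
          next
            assume "(v,b) \<in> E'\<^sup>*"
            then have "(v,v) \<in> E'\<^sup>+" using that(2) by (meson rtrancl_into_trancl1)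
            then show False using ac unfolding acyclic_def by blast
          qed
        qed
        ultimately show False using xp yp ne by metis
      qed
    qed
    show "snd ` S = Qset V E' f"
    proof
      show "snd ` S \<subseteq> Qset V E' f" unfolding S_def Qset_def using E'V by force
      show "Qset V E' f \<subseteq> snd ` S" unfolding S_def Qset_def by force
    qed
  qed
  have "card S = card (Qset V E' f)" using bij bij_betw_same_card by blast
  then show ?thesis using ms part by simp
qed

end
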